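(* For every \textsc{Set Once Strip Cover} instance $(x,b)$, the \textsc{RoundRobin} algorithm produces a valid schedule with lifetime $\mathrm{RR}(x,b)=\sum_{i=1}^n b_i/r_i$, where $r_i=\max\{x_i,1-x_i\}$, and $\mathrm{RR}(x,b)\ge \frac{2}{3}\,\mathrm{Opt}(x,b)$, where $\mathrm{Opt}(x,b)$ is the optimal lifetime of $(x,b)$. That is, \textsc{RoundRobin} is a $\frac{3}{2}$-approximation algorithm for \textsc{Set Once Strip Cover}.
   Context: \textsc{Set Once Strip Cover}: An instance is a pair $(x,b)$, where $x=(x_1,\ldots,x_n)\in[0,1]^n$ with $x_1\le\cdots\le x_n$ are sensor locations and $b=(b_1,\ldots,b_n)$, $b_i\ge 0$ rational, are battery charges. A schedule is a pair $(\rho,\tau)$ with $\rho\in[0,1]^n$ (radii) and $\tau\in[0,\infty)^n$ (activation times), each set once. Sensor $i$ covers the interval $[x_i-\rho_i,x_i+\rho_i]$ during the time interval $[\tau_i,\tau_i+b_i/\rho_i]$ and nothing otherwise (a sensor with $\rho_i=0$ covers nothing). A point $(u,t)$ is covered if $u\in[x_i-\rho_i,x_i+\rho_i]$ and $t\in[\tau_i,\tau_i+b_i/\rho_i]$ for some $i$. The lifetime of a schedule is the maximum $T$ such that every $(u,t)\in[0,1]\times[0,T]$ is covered; $\mathrm{Opt}(x,b)$ is the maximum lifetime over all schedules. The \textsc{RoundRobin} algorithm sets $\rho_i=r_i=\max\{x_i,1-x_i\}$ and $\tau_i=\sum_{j=1}^{i-1}b_j/\rho_j$ for every $i$, so that the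 sensors take turns each covering all of $[0,1]$. *)

theory Defs
  imports Complex_Main
begin

(* Sensors are indexed 0..n-1 (paper: 1..n). x i = location, b i = battery,
   rho i = radius, tau i = activation time. *)

definition covered ::
  "nat \<Rightarrow> (nat \<Rightarrow> real) \<Rightarrow> (nat \<Rightarrow> real) \<Rightarrow> (nat \<Rightarrow> real) \<Rightarrow> (nat \<Rightarrow> real)
   \<Rightarrow> real \<Rightarrow> real \<Rightarrow> bool" where
  "covered n x b rho tau u t \<longleftrightarrow>
     (\<exists>i<n. rho i > 0 \<and> x i - rho i \<le> u \<and> u \<le> x i + rho i \<and>
            tau i \<le> t \<and> t \<le> tau i + b i / rho i)"

definition covers_until ::
  "nat \<Rightarrow> (nat \<Rightarrow> real) \<Rightarrow> (nat \<Rightarrow> real) \<Rightarrow> (nat \<Rightarrow> real) \<Rightarrow> (nat \<Rightarrow> real)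
   \<Rightarrow> real \<Rightarrow> bool" where
  "covers_until n x b rho tau T \<longleftrightarrow>
     (\<forall>u\<in>{0..1}. \<forall>t\<in>{0..T}. covered n x b rho tau u t)"

(* lifetime: the largest T >= 0 such that the strip [0,1] x [0,T] is covered
   (0 by convention if not even time 0 is fully covered) *)
definition lifetime ::
  "nat \<Rightarrow> (nat \<Rightarrow> real) \<Rightarrow> (nat \<Rightarrow> real) \<Rightarrow> (nat \<Rightarrow> real) \<Rightarrow> (nat \<Rightarrow> real) \<Rightarrow> real" where
  "lifetime n x b rho tau = Sup (insert 0 {T. T \<ge> 0 \<and> covers_until n x b rho tau T})"

definition schedule :: "nat \<Rightarrow> (nat \<Rightarrow> real) \<Rightarrow> (nat \<Rightarrow> real) \<Rightarrow> bool" where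
  "schedule n rho tau \<longleftrightarrow> (\<forall>i<n. 0 \<le> rho i \<and> rho i \<le> 1 \<and> 0 \<le> tau i)"

definition Opt :: "nat \<Rightarrow> (nat \<Rightarrow> real) \<Rightarrow> (nat \<Rightarrow> real) \<Rightarrow> real" where
  "Opt n x b = Sup {lifetime n x b rho tau | rho tau. schedule n rho tau}"

definition strip_instance :: "nat \<Rightarrow> (nat \<Rightarrow> real) \<Rightarrow> (nat \<Rightarrow> real) \<Rightarrow> bool" where
  "strip_instance n x b \<longleftrightarrow>
     (\<forall>i<n. 0 \<le> x i \<and> x i \<le> 1 \<and> 0 \<le> b i \<and> b i \<in> \<rat>) \<and>
     (\<forall>i j. i \<le> j \<and> j < n \<longrightarrow> x i \<le> x j)"

definition rr_radius :: "(nat \<Rightarrow> real) \<Rightarrow> nat \<Rightarrow> real" where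
  "rr_radius x i = max (x i) (1 - x i)"

definition rr_time :: "(nat \<Rightarrow> real) \<Rightarrow> (nat \<Rightarrow> real) \<Rightarrow> nat \<Rightarrow> real" where
  "rr_time x b i = (\<Sum>j<i. b j / rr_radius x j)"

definition RR :: "nat \<Rightarrow> (nat \<Rightarrow> real) \<Rightarrow> (nat \<Rightarrow> real) \<Rightarrow> real" where
  "RR n x b = (\<Sum>i<n. b i / rr_radius x i)"

end

theory Submission
  imports Defs "HOL-Analysis.Analysis"
begin

definition Fp :: "real \<Rightarrow> real" where
  "Fp p = (if p \<le> 1/2 then p / (2 - p) else 2/3 - (1 - p) / (1 + p))"

lemma Fp_low: assumes "0 \<le> a" "a \<le> 1/2" shows "Fp a \<le> 1/3" "0 \<le> Fp a"
  using assms by (auto simp: Fp_def divide_simps)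

lemma Fp_high: assumes "1/2 < a" "a \<le> 1" shows "1/3 \<le> Fp a" "Fp a \<le> 2/3"
  using assms by (auto simp: Fp_def divide_simps)

lemma Fp_range: assumes "0 \<le> a" "a \<le> 1" shows "0 \<le> Fp a" "Fp a \<le> 2/3"
  using Fp_low Fp_high assms by (cases "a \<le> 1/2"; force)+

lemma Fp_mono: assumes "0 \<le> a" "a \<le> b" "b \<le> 1" shows "Fp a \<le> Fp b"
proof (cases "b \<le> 1/2")
  case True
  have "a * (2 - b) \<le> b * (2 - a)" using assms by (simp add: algebra_simps)
  then show ?thesis using assms True by (simp add: Fp_def divide_simps)
next
  case False
  show ?thesis
  proof (cases "a \<le> 1/2")
    case True
    then show ?thesis using Fp_low[of a] Fp_high[of b] assms False by auto
  next
    case F2: False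
    have "(1 - b) * (1 + a) \<le> (1 - a) * (1 + b)" using assms by (simp add: algebra_simps)
    then show ?thesis using assms False F2 by (simp add: Fp_def divide_simps) (simp add: algebra_simps)
  qed
qed

lemma Fp_0[simp]: "Fp 0 = 0" by (simp add: Fp_def)
lemma Fp_1[simp]: "Fp 1 = 2/3" by (simp add: Fp_def)

lemma Fp_refl: assumes "0 \<le> p" "p \<le> 1" shows "Fp (1 - p) = 2/3 - Fp p"
proof (cases "p < 1/2")
  case True then show ?thesis by (auto simp add: Fp_def)
next
  case False
  show ?thesis
  proof (cases "p = 1/2")
    case True show ?thesis unfolding True by (simp add: Fp_def)
  next
    case False2: False
    then show ?thesis using False assms by (simp add: Fp_def)
  qed
qed

lemma K1: assumes "0 \<le> l" "l \<le> h" "h \<le> 1/2"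
  shows "Fp h - Fp l \<le> (h - l) / (2 - h - l)"
proof -
  have "Fp h - Fp l = 2 * (h - l) / ((2 - h) * (2 - l))"
    using assms by (simp add: Fp_def divide_simps) (simp add: algebra_simps)
  also have "\<dots> \<le> (h - l) / (2 - h - l)"
  proof -
    have "2 * (2 - h - l) \<le> (2 - h) * (2 - l)" using assms
      by (simp add: algebra_simps)
    then have "2 * (h - l) * (2 - h - l) \<le> (h - l) * ((2 - h) * (2 - l))"
      using assms by (metis mult.assoc mult.commute mult_left_mono diff_ge_0_iff_ge)
    then show ?thesis using assms by (simp add: divide_simps)
  qed
  finally show ?thesis .
qed

lemma K2: assumes "0 \<le> l" "1/2 < h" "h < 1" "l + h \<le> 1"
  shows "Fp h - Fp l \<le> (h - l) / (2 - h - l)"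
proof -
  have l2: "l \<le> 1/2" using assms by linarith
  have N: "0 \<le> 4 - 4*l + l^2 - 16*h + 15*h*l - 5*h*l^2 + 16*h^2 - 11*h^2*l"
  proof -
    have e: "4 - 4*l + l^2 - 16*h + 15*h*l - 5*h*l^2 + 16*h^2 - 11*h^2*l
        = 4*(1-2*h)^2 + l*((11*h-4)*(1-h)) + l^2*(1-5*h)"
      by (simp add: algebra_simps power2_eq_square)
    have a: "l^2*(1-5*h) \<ge> l*((1-h)*(1-5*h))"
    proof -
      have "l * l \<le> l * (1 - h)" using assms by (intro mult_left_mono) auto
      then have "l*(1-h)*(1-5*h) \<le> l*l*(1-5*h)"
        using assms by (intro mult_right_mono_neg) auto
      then show ?thesis by (simp add: power2_eq_square algebra_simps)
    qed
    have b: "l*((11*h-4)*(1-h)) + l*((1-h)*(1-5*h)) = l*(1-h)*(6*h-3)"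
      by (simp add: algebra_simps)
    have c: "0 \<le> l*(1-h)*(6*h-3)" using assms by auto
    show ?thesis unfolding e using a b c by (smt (verit) zero_le_power2 mult_nonneg_nonneg)
  qed
  have d1: "2 - h - l > 0" "2 - l > 0" "1 + h > 0" using assms by auto
  have "Fp h - Fp l = 2/3 - (1-h)/(1+h) - l/(2-l)" using assms l2 by (simp add: Fp_def)
  moreover have "2/3 - (1-h)/(1+h) - l/(2-l) \<le> (h - l) / (2 - h - l)"
  proof -
    have "3*((h-l)*(2-l)*(1+h) + l*(2-h-l)*(1+h) + (1-h)*(2-h-l)*(2-l)) - 2*((2-h-l)*(2-l)*(1+h))
       = 4 - 4*l + l^2 - 16*h + 15*h*l - 5*h*l^2 + 16*h^2 - 11*h^2*l"
      by (simp add: algebra_simps power2_eq_square)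
    then show ?thesis using N d1 by (simp add: divide_simps) (simp add: algebra_simps)
  qed
  ultimately show ?thesis by simp
qed

lemma K_left: assumes "0 \<le> x" "x \<le> 1/2" "0 < r"
  shows "Fp (min (x + r) 1) - Fp (max (x - r) 0) \<le> r / (1 - x)"
proof (cases "x + r \<ge> 1")
  case True
  have "Fp (min (x + r) 1) \<le> 2/3" using Fp_range[of "min (x + r) 1"] assms by auto
  moreover have "0 \<le> Fp (max (x - r) 0)" using Fp_range[of "max (x - r) 0"] assms by auto
  moreover have "1 \<le> r / (1 - x)" using True assms by (simp add: divide_simps)
  ultimately show ?thesis by linarith
next
  case False
  then have mh: "min (x + r) 1 = x + r" by simp
  have eq: "(x + r - (x - r)) / (2 - (x + r) - (x - r)) = r / (1 - x)"
    using assms by (simp add: divide_simps)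
  show ?thesis
  proof (cases "x - r \<ge> 0")
    case True
    then have "max (x - r) 0 = x - r" by simp
    moreover have "Fp (x + r) - Fp (x - r) \<le> r / (1 - x)"
    proof (cases "x + r \<le> 1/2")
      case True
      show ?thesis using K1[of "x - r" "x + r"] True \<open>x - r \<ge> 0\<close> assms eq by simp
    next
      case False2: False
      show ?thesis using K2[of "x - r" "x + r"] False2 False \<open>x - r \<ge> 0\<close> assms eq by simp
    qed
    ultimately show ?thesis using mh by simp
  next
    case neg: False
    then have "max (x - r) 0 = 0" by simp
    moreover have "Fp (x + r) \<le> (x + r) / (2 - (x + r))"
    proof (cases "x + r \<le> 1/2")
      case True
      show ?thesis using K1[of 0 "x + r"] True assms by simp
    next
      case False2: False
      show ?thesis using K2[of 0 "x + r"] False2 False assms by simp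
    qed
    moreover have "(x + r) / (2 - (x + r)) \<le> r / (1 - x)"
    proof -
      have "0 \<le> (r - x) * (1 - x - r)" using neg False by auto
      then have "(x + r) * (1 - x) \<le> r * (2 - (x + r))" by (simp add: algebra_simps)
      then show ?thesis using assms False by (simp add: divide_simps)
    qed
    ultimately show ?thesis using mh by simp
  qed
qed

lemma K: assumes "0 \<le> x" "x \<le> 1" "0 < r"
  shows "Fp (min (x + r) 1) - Fp (max (x - r) 0) \<le> r / max x (1 - x)"
proof (cases "x \<le> 1/2")
  case True
  then show ?thesis using K_left[OF assms(1) True assms(3)] by (simp add: max_def)
next
  case False
  define y where "y = 1 - x"
  have y: "0 \<le> y" "y \<le> 1/2" using False assms unfolding y_def by auto
  have A: "Fp (min (y + r) 1) - Fp (max (y - r) 0) \<le> r / (1 - y)" using K_left[OF y assms(3)] .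
  have e1: "min (x + r) 1 = 1 - max (y - r) 0" unfolding y_def by (simp add: min_def max_def)
  have e2: "max (x - r) 0 = 1 - min (y + r) 1" unfolding y_def by (simp add: min_def max_def)
  have r1: "Fp (1 - max (y - r) 0) = 2/3 - Fp (max (y - r) 0)"
    by (rule Fp_refl) (use y assms in auto)
  have r2: "Fp (1 - min (y + r) 1) = 2/3 - Fp (min (y + r) 1)"
    by (rule Fp_refl) (use y assms in auto)
  have "max x (1 - x) = 1 - y" using False unfolding y_def by (simp add: max_def)
  then show ?thesis unfolding e1 e2 r1 r2 using A by simp
qed

lemma chain:
  fixes x rho :: "nat \<Rightarrow> real"
  assumes "finite A" "\<forall>i\<in>A. 0 \<le> x i \<and> x i \<le> 1 \<and> 0 < rho i" "0 \<le> p" "p \<le> 1"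
    "\<forall>u\<in>{0..p}. \<exists>i\<in>A. x i - rho i \<le> u \<and> u \<le> x i + rho i"
  shows "Fp p \<le> (\<Sum>i\<in>A. rho i / max (x i) (1 - x i))"
  using assms
proof (induction "card A" arbitrary: A p rule: less_induct)
  case less
  have "p \<in> {0..p}" using less.prems(3) by simp
  then obtain i where i: "i \<in> A" "x i - rho i \<le> p" "p \<le> x i + rho i" using less.prems(5) by blast
  have xi: "0 \<le> x i" "x i \<le> 1" "0 < rho i" using less.prems(2) i(1) by auto
  have nn: "\<And>j. j \<in> A \<Longrightarrow> 0 \<le> rho j / max (x j) (1 - x j)"
    using less.prems(2) by (auto intro!: divide_nonneg_pos)
  have sumeq: "(\<Sum>j\<in>A. rho j / max (x j) (1 - x j)) = rho i / max (x i) (1 - x i) + (\<Sum>j\<in>A-{i}. rho j / max (x j) (1 - x j))"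
    using less.prems(1) i(1) by (simp add: sum.remove)
  have Kp: "Fp p - Fp (max (x i - rho i) 0) \<le> rho i / max (x i) (1 - x i)"
  proof -
    have "Fp p \<le> Fp (min (x i + rho i) 1)" using Fp_mono[of p "min (x i + rho i) 1"] less.prems i by auto
    then show ?thesis using K[OF xi] by linarith
  qed
  show ?case
  proof (cases "x i - rho i \<le> 0")
    case True
    have "0 \<le> (\<Sum>j\<in>A-{i}. rho j / max (x j) (1 - x j))" using nn by (intro sum_nonneg) auto
    then show ?thesis using Kp True sumeq by (simp add: max_def)
  next
    case False
    define l where "l = x i - rho i"
    have l: "0 < l" "l \<le> p" using False i unfolding l_def by auto
    define U where "U = (\<Union>j\<in>A-{i}. {x j - rho j .. x j + rho j})"
    have cU: "closed U" unfolding U_def using less.prems(1) by (intro closed_UN) auto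
    have "{0..<l} \<subseteq> U"
    proof
      fix u assume u: "u \<in> {0..<l}"
      then have "u \<in> {0..p}" using l by auto
      then obtain j where j: "j \<in> A" "x j - rho j \<le> u" "u \<le> x j + rho j" using less.prems(5) by blast
      have "j \<noteq> i" using j u unfolding l_def by auto
      then show "u \<in> U" using j unfolding U_def by auto
    qed
    then have "closure {0..<l} \<subseteq> U" using cU by (rule closure_minimal)
    then have sub: "{0..l} \<subseteq> U" using l by simp
    have cov: "\<forall>u\<in>{0..l}. \<exists>j\<in>A-{i}. x j - rho j \<le> u \<and> u \<le> x j + rho j"
      using sub unfolding U_def by fastforce
    have "card (A - {i}) < card A" using less.prems(1) i(1) by (meson card_Diff1_less)
    then have IH: "Fp l \<le> (\<Sum>j\<in>A-{i}. rho j / max (x j) (1 - x j))"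
      using less.hyps[of "A - {i}" l] less.prems cov l by auto
    show ?thesis using IH Kp sumeq False unfolding l_def by (simp add: max_def)
  qed
qed

lemma rr_pos: "0 \<le> x i \<Longrightarrow> x i \<le> 1 \<Longrightarrow> 1/2 \<le> rr_radius x i \<and> rr_radius x i \<le> 1"
  by (auto simp: rr_radius_def max_def)

lemma rr_half: "1/2 \<le> rr_radius x i" by (auto simp: rr_radius_def max_def)
lemma rr_gt0[simp]: "0 < rr_radius x i" using rr_half[of x i] by linarith

definition gfun :: "(nat \<Rightarrow> real) \<Rightarrow> (nat \<Rightarrow> real) \<Rightarrow> (nat \<Rightarrow> real) \<Rightarrow> (nat \<Rightarrow> real) \<Rightarrow> nat \<Rightarrow> real \<Rightarrow> real" where
  "gfun x b rho tau i t = (if 0 < rho i \<and> t \<in> {tau i .. tau i + b i / rho i} then rho i / rr_radius x i else 0)"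

lemma cover_sum:
  assumes inst: "strip_instance n x b" and cov: "\<forall>u\<in>{0..1}. covered n x b rho tau u t"
  shows "2/3 \<le> (\<Sum>i<n. gfun x b rho tau i t)"
proof -
  define A where "A = {i. i < n \<and> 0 < rho i \<and> t \<in> {tau i .. tau i + b i / rho i}}"
  have fA: "finite A" unfolding A_def by auto
  have "(\<Sum>i<n. gfun x b rho tau i t) = (\<Sum>i\<in>A. rho i / max (x i) (1 - x i))"
  proof -
    have "(\<Sum>i<n. gfun x b rho tau i t) = (\<Sum>i\<in>{..<n} \<inter> {i. 0 < rho i \<and> t \<in> {tau i .. tau i + b i / rho i}}. rho i / rr_radius x i)"
      unfolding gfun_def by (simp add: sum.If_cases)
    also have "{..<n} \<inter> {i. 0 < rho i \<and> t \<in> {tau i .. tau i + b i / rho i}} = A" unfolding A_def by auto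
    finally show ?thesis by (simp add: rr_radius_def)
  qed
  moreover have "Fp 1 \<le> (\<Sum>i\<in>A. rho i / max (x i) (1 - x i))"
  proof (rule chain[OF fA])
    show "\<forall>i\<in>A. 0 \<le> x i \<and> x i \<le> 1 \<and> 0 < rho i" using inst unfolding A_def strip_instance_def by auto
    show "\<forall>u\<in>{0..1}. \<exists>i\<in>A. x i - rho i \<le> u \<and> u \<le> x i + rho i"
      using cov unfolding covered_def A_def by fastforce
  qed auto
  ultimately show ?thesis by simp
qed

lemma gfun_int:
  assumes inst: "strip_instance n x b" and sch: "schedule n rho tau" and i: "i < n"
  shows "\<exists>I. (gfun x b rho tau i has_integral I) {0..T} \<and> I \<le> b i / rr_radius x i"
proof (cases "0 < rho i")
  case False
  then have "gfun x b rho tau i = (\<lambda>t. 0)" unfolding gfun_def by auto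
  moreover have "0 \<le> b i / rr_radius x i" using inst i rr_pos[of x i] unfolding strip_instance_def by auto
  ultimately show ?thesis by auto
next
  case True
  define c where "c = rho i / rr_radius x i"
  define S where "S = {tau i .. tau i + b i / rho i}"
  have g: "gfun x b rho tau i = (\<lambda>t. if t \<in> S then c else 0)"
    unfolding gfun_def c_def S_def using True by auto
  have SI: "S \<inter> {0..T} = {max (tau i) 0 .. min (tau i + b i / rho i) T}" unfolding S_def by auto
  have h: "((\<lambda>t. c) has_integral (measure lborel (S \<inter> {0..T}) *\<^sub>R c)) (S \<inter> {0..T})"
    unfolding SI by (rule has_integral_const_real)
  have r: "1/2 \<le> rr_radius x i" and bb: "0 \<le> b i" using inst i rr_pos[of x i] unfolding strip_instance_def by auto
  have c0: "0 \<le> c" unfolding c_def using True r by auto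
  have ct: "measure lborel (S \<inter> {0..T}) \<le> b i / rho i"
    unfolding SI using True bb by (auto simp: content_real_if)
  have "measure lborel (S \<inter> {0..T}) *\<^sub>R c \<le> b i / rho i * c"
    using mult_right_mono[OF ct c0] by simp
  also have "b i / rho i * c = b i / rr_radius x i" unfolding c_def using True by simp
  finally have le: "measure lborel (S \<inter> {0..T}) *\<^sub>R c \<le> b i / rr_radius x i" .
  have "(gfun x b rho tau i has_integral (measure lborel (S \<inter> {0..T}) *\<^sub>R c)) {0..T}"
    unfolding g using has_integral_restrict_Int[THEN iffD2, OF h] .
  then show ?thesis using le by blast
qed

lemma main_bound:
  assumes inst: "strip_instance n x b" and sch: "schedule n rho tau"
    and T: "0 \<le> T" "covers_until n x b rho tau T"
  shows "T \<le> 3/2 * RR n x b"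
proof -
  have "\<forall>i\<in>{..<n}. \<exists>I. (gfun x b rho tau i has_integral I) {0..T} \<and> I \<le> b i / rr_radius x i"
    using gfun_int[OF inst sch] by auto
  then obtain I where I: "\<And>i. i \<in> {..<n} \<Longrightarrow> (gfun x b rho tau i has_integral I i) {0..T} \<and> I i \<le> b i / rr_radius x i"
    by metis
  have hs: "((\<lambda>t. \<Sum>i<n. gfun x b rho tau i t) has_integral (\<Sum>i<n. I i)) {0..T}"
    using I by (intro has_integral_sum) auto
  have hc: "((\<lambda>t. 2/3) has_integral (measure lborel {0..T} *\<^sub>R (2/3))) {0..T}" by (rule has_integral_const_real)
  have "measure lborel {0..T} *\<^sub>R (2/3::real) \<le> (\<Sum>i<n. I i)"
  proof (rule has_integral_le[OF hc hs])
    fix t assume "t \<in> {0..T}"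
    then show "2/3 \<le> (\<Sum>i<n. gfun x b rho tau i t)"
      using cover_sum[OF inst] T(2) unfolding covers_until_def by auto
  qed
  also have "\<dots> \<le> RR n x b" unfolding RR_def using I by (intro sum_mono) auto
  finally show ?thesis using T(1) by simp
qed

lemma rt_Suc: "rr_time x b (Suc i) = rr_time x b i + b i / rr_radius x i"
  by (simp add: rr_time_def)

lemma rt_mono: assumes "strip_instance n x b" "i \<le> j" "j \<le> n"
  shows "rr_time x b i \<le> rr_time x b j"
  unfolding rr_time_def
proof (rule sum_mono2)
  show "\<And>k. k \<in> {..<j} - {..<i} \<Longrightarrow> 0 \<le> b k / rr_radius x k"
    using assms unfolding strip_instance_def by (auto intro!: divide_nonneg_pos)
qed (use assms in auto)

lemma rt_n: "rr_time x b n = RR n x b" by (simp add: rr_time_def RR_def)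

lemma rr_covers:
  assumes inst: "strip_instance n x b" and n: "0 < n"
  shows "covers_until n x b (rr_radius x) (rr_time x b) (RR n x b)"
  unfolding covers_until_def
proof (intro ballI)
  fix u t assume u: "u \<in> {0..(1::real)}" and t: "t \<in> {0..RR n x b}"
  define K where "K = {i. i < n \<and> rr_time x b i \<le> t}"
  have fK: "finite K" unfolding K_def by auto
  have "0 \<in> K" using n t unfolding K_def by (simp add: rr_time_def)
  then have neK: "K \<noteq> {}" by auto
  define i where "i = Max K"
  have iK: "i \<in> K" unfolding i_def using fK neK by (rule Max_in)
  then have i: "i < n" "rr_time x b i \<le> t" unfolding K_def by auto
  have t2: "t \<le> rr_time x b (Suc i)"
  proof (cases "Suc i = n")
    case True then show ?thesis using t rt_n[of x b n] by simp
  next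
    case False
    then have "Suc i < n" using i by simp
    moreover have "Suc i \<notin> K" using Max_ge[OF fK, of "Suc i"] unfolding i_def[symmetric] by auto
    ultimately show ?thesis unfolding K_def by auto
  qed
  have xi: "0 \<le> x i" "x i \<le> 1" using inst i unfolding strip_instance_def by auto
  have r: "1/2 \<le> rr_radius x i" by (rule rr_half)
  show "covered n x b (rr_radius x) (rr_time x b) u t"
    unfolding covered_def
  proof (intro exI[of _ i] conjI)
    show "x i - rr_radius x i \<le> u" "u \<le> x i + rr_radius x i"
      using u xi by (auto simp: rr_radius_def max_def)
  qed (use i r t2 rt_Suc[of x b i] in auto)
qed

lemma rr_not_beyond:
  assumes inst: "strip_instance n x b" and c: "covers_until n x b (rr_radius x) (rr_time x b) T" and T: "0 \<le> T"
  shows "T \<le> RR n x b"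
proof -
  have "covered n x b (rr_radius x) (rr_time x b) 0 T" using c T unfolding covers_until_def by auto
  then obtain i where i: "i < n" "T \<le> rr_time x b i + b i / rr_radius x i"
    unfolding covered_def by auto
  have "rr_time x b (Suc i) \<le> rr_time x b n" using rt_mono[OF inst, of "Suc i" n] i by auto
  then show ?thesis using i rt_Suc[of x b i] rt_n[of x b n] by simp
qed

lemma RR_nonneg: assumes "strip_instance n x b" shows "0 \<le> RR n x b"
  unfolding RR_def using assms unfolding strip_instance_def
  by (auto intro!: sum_nonneg divide_nonneg_pos)

theorem theorem2:
  fixes n :: nat and x b :: "nat \<Rightarrow> real"
  assumes "strip_instance n x b"
  shows "schedule n (rr_radius x) (rr_time x b)
       \<and> lifetime n x b (rr_radius x) (rr_time x b) = RR n x b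
       \<and> RR n x b \<ge> 2 / 3 * Opt n x b"
proof (intro conjI)
  note inst = assms
  show sch: "schedule n (rr_radius x) (rr_time x b)"
    unfolding schedule_def
  proof (intro allI impI conjI)
    fix i assume i: "i < n"
    then have xi: "0 \<le> x i" "x i \<le> 1" using inst unfolding strip_instance_def by auto
    show "0 \<le> rr_radius x i" "rr_radius x i \<le> 1" using xi by (auto simp: rr_radius_def)
    show "0 \<le> rr_time x b i" using rt_mono[OF inst, of 0 i] i by (simp add: rr_time_def)
  qed
  show "lifetime n x b (rr_radius x) (rr_time x b) = RR n x b"
    unfolding lifetime_def
  proof (rule cSup_eq_maximum)
    show "RR n x b \<in> insert 0 {T. 0 \<le> T \<and> covers_until n x b (rr_radius x) (rr_time x b) T}"
    proof (cases "n = 0")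
      case True then show ?thesis by (simp add: RR_def)
    next
      case False then show ?thesis using rr_covers[OF inst] RR_nonneg[OF inst] by auto
    qed
    show "\<And>y. y \<in> insert 0 {T. 0 \<le> T \<and> covers_until n x b (rr_radius x) (rr_time x b) T} \<Longrightarrow> y \<le> RR n x b"
      using rr_not_beyond[OF inst] RR_nonneg[OF inst] by auto
  qed
  have "Opt n x b \<le> 3/2 * RR n x b"
    unfolding Opt_def
  proof (rule cSup_least)
    show "{lifetime n x b rho tau |rho tau. schedule n rho tau} \<noteq> {}" using sch by auto
    fix y assume "y \<in> {lifetime n x b rho tau |rho tau. schedule n rho tau}"
    then obtain rho tau where y: "y = lifetime n x b rho tau" and s: "schedule n rho tau" by auto
    show "y \<le> 3/2 * RR n x b" unfolding y lifetime_def
    proof (rule cSup_least)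
      show "insert 0 {T. 0 \<le> T \<and> covers_until n x b rho tau T} \<noteq> {}" by simp
      fix z assume "z \<in> insert 0 {T. 0 \<le> T \<and> covers_until n x b rho tau T}"
      then show "z \<le> 3/2 * RR n x b" using main_bound[OF inst s] RR_nonneg[OF inst] by auto
    qed
  qed
  then show "RR n x b \<ge> 2 / 3 * Opt n x b" by simp
qed

end
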